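(* Let $\mathcal{A}$ be a complex unital Banach algebra, let $p,q\in\mathcal{A}$ be idempotents and $m\in\mathbb{N}$. Then $$p+q-pq+\sum_{k=2}^{m}\big((pq)^{k-1}p-(pq)^k\big)$$ is Drazin invertible (respectively, g-Drazin invertible) if and only if $1-(pq)^m$ is Drazin invertible (respectively, g-Drazin invertible).
   Context: $\mathcal{A}$ is a complex unital Banach algebra with unit $1$; an idempotent is an element $e$ with $e^2=e$. An element $a$ is Drazin invertible if there exists $b\in\mathcal{A}$ with $ab=ba$, $bab=b$, and $(a(1-ab))^n=0$ for some $n\in\mathbb{N}$; g-Drazin invertible if there exists $b$ with $ab=ba$, $bab=b$, and $a(1-ab)$ quasinilpotent (spectral radius $0$). The empty sum (for $m=1$) is $0$. *)

theory Defs
  imports "HOL-Analysis.Analysis"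
begin

class complex_banach_algebra_1 = real_normed_algebra_1 + banach +
  fixes scaleC :: "complex \<Rightarrow> 'a \<Rightarrow> 'a"
  assumes scaleC_add_right: "scaleC c (x + y) = scaleC c x + scaleC c y"
    and scaleC_add_left: "scaleC (c + d) x = scaleC c x + scaleC d x"
    and scaleC_scaleC: "scaleC c (scaleC d x) = scaleC (c * d) x"
    and scaleC_one: "scaleC 1 x = x"
    and scaleC_of_real: "scaleC (complex_of_real r) x = scaleR r x"
    and norm_scaleC: "norm (scaleC c x) = cmod c * norm x"
    and scaleC_mult_left: "scaleC c x * y = scaleC c (x * y)"
    and scaleC_mult_right: "x * scaleC c y = scaleC c (x * y)"

definition idempotent :: "'a::monoid_mult \<Rightarrow> bool" where
  "idempotent e \<longleftrightarrow> e * e = e"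

definition invertible_elem :: "'a::ring_1 \<Rightarrow> bool" where
  "invertible_elem x \<longleftrightarrow> (\<exists>y. x * y = 1 \<and> y * x = 1)"

definition ba_spectrum :: "'a::complex_banach_algebra_1 \<Rightarrow> complex set" where
  "ba_spectrum a = {z. \<not> invertible_elem (a - scaleC z 1)}"

definition spectral_radius :: "'a::complex_banach_algebra_1 \<Rightarrow> real" where
  "spectral_radius a = Sup (cmod ` ba_spectrum a)"

definition quasinilpotent :: "'a::complex_banach_algebra_1 \<Rightarrow> bool" where
  "quasinilpotent a \<longleftrightarrow> spectral_radius a = 0"

definition drazin_invertible :: "'a::complex_banach_algebra_1 \<Rightarrow> bool" where
  "drazin_invertible a \<longleftrightarrow>
     (\<exists>b. a * b = b * a \<and> b * a * b = b \<and> (\<exists>n::nat. (a * (1 - a * b)) ^ n = 0))"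

definition g_drazin_invertible :: "'a::complex_banach_algebra_1 \<Rightarrow> bool" where
  "g_drazin_invertible a \<longleftrightarrow>
     (\<exists>b. a * b = b * a \<and> b * a * b = b \<and> quasinilpotent (a * (1 - a * b)))"

end

theory Submission
  imports Defs
begin


definition DP :: "('a::ring_1 \<Rightarrow> bool) \<Rightarrow> 'a \<Rightarrow> bool" where
  "DP P y \<longleftrightarrow> (\<exists>b. y * b = b * y \<and> b * y * b = b \<and> P (y * (1-y * b)))"

definition swapP :: "('a::ring_1 \<Rightarrow> bool) \<Rightarrow> bool" where
  "swapP P \<longleftrightarrow> (\<forall>u w. P (u * w) \<longrightarrow> P (w * u))"

definition invP :: "('a::ring_1 \<Rightarrow> bool) \<Rightarrow> bool" where
  "invP P \<longleftrightarrow> (\<forall>r. P r \<longrightarrow> invertible_elem (1 - r))"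

lemma cline:
  fixes u v :: "'a::ring_1"
  assumes sw: "swapP P" and d: "DP P (u * v)"
  shows "DP P (v * u)"
proof -
  obtain b where h1: "u * v * b = b * (u * v)" and h2: "b * (u * v) * b = b" and h3: "P (u * v * (1-u * v * b))"
    using d unfolding DP_def by blast
  have h4: "b * b * (u * v) = b" using h1 h2 by (metis mult.assoc)
  have h5: "u * v * b * b = b" using h1 h2 by (metis mult.assoc)
  define b' where "b' = v * b * b * u"
  have c1: "v * u * b' = v * b * u"
  proof -
    have "v * u * b' = v * (u * v * b * b) * u" unfolding b'_def by (simp add: mult.assoc)
    then show ?thesis using h5 by simp
  qed
  have c2: "b' * (v * u) = v * b * u"
  proof -
    have "b' * (v * u) = v * (b * b * (u * v)) * u" unfolding b'_def by (simp add: mult.assoc)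
    then show ?thesis using h4 by simp
  qed
  have c3: "b' * (v * u) * b' = b'"
  proof -
    have "b' * (v * u) * b' = (v * b * u) * b'" using c2 by simp
    also have "\<dots> = v * (b * (u * v) * b) * b * u" unfolding b'_def by (simp add: mult.assoc)
    finally have "b' * (v * u) * b' = v * (b * (u * v) * b) * b * u" .
    then show ?thesis using h2 unfolding b'_def by simp
  qed
  have "u * v * (1-u * v * b) = u * (v * (1-u * v * b))" by (simp add: mult.assoc)
  then have "P (v * (1-u * v * b) * u)" using h3 sw unfolding swapP_def by metis
  moreover have "v * (1-u * v * b) * u = v * u * (1 - v * u * b')"
    using c1 by (simp add: algebra_simps)
  ultimately show ?thesis unfolding DP_def using c1 c2 c3 by metis
qed

lemma invP_inv:
  assumes "invP P" "P r"
  obtains s where "s * (1 - r) = 1" "(1 - r) * s = 1"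
  using assms unfolding invP_def invertible_elem_def by blast

lemma triR_fwd:
  fixes a q :: "'a::ring_1"
  assumes sw: "swapP P" and ip: "invP P" and qq: "q * q = q" and aq: "a * q = q"
    and d: "DP P a"
  shows "DP P ((1 - q) * a)"
proof -
  obtain B where g1: "a * B = B * a" and g2: "B * a * B = B" and g3: "P (a * (1 - a * B))"
    using d unfolding DP_def by blast
  define E where "E = a * B"
  define res where "res = a * (1 - a * B)"
  have EE: "E * E = E" unfolding E_def using g2 g1 by (metis mult.assoc)
  have Ea: "E * a = a * E" unfolding E_def using g1 by (metis mult.assoc)
  have EB: "E * B = B" unfolding E_def using g1 g2 by (metis mult.assoc)
  define w where "w = (1 - E) * q"
  have resw: "res * w = w"
  proof -
    have "res * w = a * ((1 - E) * (1 - E)) * q" unfolding res_def w_def E_def by (simp add: mult.assoc)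
    also have "(1 - E) * (1 - E) = 1 - E" using EE by (simp add: algebra_simps)
    also have "a * (1 - E) = (1 - E) * a" using Ea by (simp add: algebra_simps)
    finally show ?thesis unfolding w_def using aq by (simp add: mult.assoc)
  qed
  obtain s where s1: "s * (1 - res) = 1" using invP_inv[OF ip g3] res_def by metis
  have "(1 - res) * w = 0" using resw by (simp add: algebra_simps)
  then have "s * ((1 - res) * w) = 0" by simp
  then have w0: "w = 0" using s1 by (metis mult.assoc mult_1_left)
  have Eq: "E * q = q" using w0 unfolding w_def by (simp add: algebra_simps)
  have Bq: "B * q = q" using Eq aq g1 unfolding E_def by (metis mult.assoc)
  define b where "b = (1 - q) * B"
  define c where "c = (1 - q) * a"
  have aq': "a * (1 - q) = a - q" using aq by (simp add: algebra_simps)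
  have Bq': "B * (1 - q) = B - q" using Bq by (simp add: algebra_simps)
  have Eq': "E * (1 - q) = E - q" using Eq by (simp add: algebra_simps)
  have qq': "(1 - q) * q = 0" using qq by (simp add: algebra_simps)
  have cb: "c * b = (1 - q) * E"
  proof -
    have "c * b = (1 - q) * (a * (1 - q)) * B" unfolding c_def b_def by (simp add: mult.assoc)
    also have "\<dots> = (1 - q) * E - (1 - q) * q * B" unfolding aq' E_def by (simp add: algebra_simps)
    finally show ?thesis using qq' by simp
  qed
  have bc: "b * c = (1 - q) * E"
  proof -
    have "b * c = (1 - q) * (B * (1 - q)) * a" unfolding c_def b_def by (simp add: mult.assoc)
    also have "\<dots> = (1 - q) * (B * a) - (1 - q) * q * a" unfolding Bq' by (simp add: algebra_simps)
    finally show ?thesis using qq' g1 unfolding E_def by simp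
  qed
  have bcb: "b * c * b = b"
  proof -
    have "b * c * b = (1 - q) * E * b" using bc by simp
    also have "\<dots> = (1 - q) * (E * (1 - q)) * B" unfolding b_def by (simp add: mult.assoc)
    also have "\<dots> = (1 - q) * (E * B) - (1 - q) * q * B" unfolding Eq' by (simp add: algebra_simps)
    finally show ?thesis using qq' EB unfolding b_def by simp
  qed
  have resq: "res * q = 0"
  proof -
    have "res * q = a * w" unfolding res_def w_def E_def by (simp add: mult.assoc)
    then show ?thesis using w0 by simp
  qed
  have rc: "c * (1 - c * b) = (1 - q) * res"
  proof -
    have "c * (1 - c * b) = c - c * (c * b)" by (simp add: right_diff_distrib mult.assoc)
    also have "\<dots> = c - c * ((1 - q) * E)" unfolding cb ..
    also have "\<dots> = (1 - q) * a - (1 - q) * (a * (1 - q)) * E"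
      unfolding c_def by (simp add: mult.assoc)
    also have "\<dots> = (1 - q) * a - (1 - q) * (a * E) + (1 - q) * q * E"
      unfolding aq' by (simp add: algebra_simps)
    also have "\<dots> = (1 - q) * res" unfolding res_def E_def using qq' by (simp add: algebra_simps)
    finally show ?thesis .
  qed
  have "res * (1 - q) = res" using resq by (simp add: algebra_simps)
  then have "P ((1 - q) * res)" using g3 sw unfolding swapP_def res_def by metis
  then show ?thesis unfolding DP_def using rc cb bc bcb c_def[symmetric] by metis
qed

lemma triR_bwd:
  fixes a q :: "'a::ring_1"
  assumes sw: "swapP P" and ip: "invP P" and qq: "q * q = q" and aq: "a * q = q"
    and d: "DP P ((1 - q) * a)"
  shows "DP P a"
proof -
  define c where "c = (1 - q) * a"
  obtain b where k1: "c * b = b * c" and k2: "b * c * b = b" and k3: "P (c * (1 - c * b))"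
    using d unfolding DP_def c_def by blast
  have qq': "(1 - q) * q = 0" "q * (1 - q) = 0" using qq by (simp_all add: algebra_simps)
  have cq: "c * q = 0" unfolding c_def using aq qq'(1) by (simp add: mult.assoc)
  have qc: "q * c = 0" unfolding c_def using qq'(2) by (metis mult.assoc mult_zero_left)
  have bbc: "b * (b * c) = b" using k1 k2 by (metis mult.assoc)
  have cbb: "c * (b * b) = b" using k1 k2 by (metis mult.assoc)
  have bq: "b * q = 0" using bbc cq by (metis mult.assoc mult_zero_right)
  have qb: "q * b = 0" using cbb qc by (metis mult.assoc mult_zero_left)
  define e where "e = c * b"
  have ee: "e * e = e" unfolding e_def using k1 k2 by (metis mult.assoc)
  have eq: "e * q = 0" unfolding e_def using bq by (simp add: mult.assoc)
  have qe: "q * e = 0" unfolding e_def using qc by (metis mult.assoc mult_zero_left)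
  have ce: "c * e = e * c" unfolding e_def using k1 by (metis mult.assoc)
  have eb: "e * b = b" unfolding e_def using cbb by (simp add: mult.assoc)
  have be: "b * e = b" unfolding e_def using k1 k2 by (metis mult.assoc)
  have bc: "b * c = e" unfolding e_def using k1 by simp
  define r where "r = c - c * e"
  have rdef: "c * (1 - c * b) = r" unfolding r_def e_def by (simp add: algebra_simps)
  have Pr: "P r" using k3 rdef by simp
  obtain s where s1: "s * (1 - r) = 1" and s2: "(1 - r) * s = 1" using invP_inv[OF ip Pr] by metis
  have rq: "r * q = 0" unfolding r_def using cq eq by (simp add: algebra_simps mult.assoc)
  have qr: "q * r = 0" unfolding r_def using qc by (simp add: right_diff_distrib) (metis mult.assoc mult_zero_left)
  have re: "r * e = 0" unfolding r_def using ee by (simp add: algebra_simps mult.assoc)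
  have rb: "r * b = 0" unfolding r_def using eb by (simp add: algebra_simps mult.assoc)
  have fix1: "s * x = x" if "r * x = 0" for x
  proof -
    have "(1 - r) * x = x" using that by (simp add: algebra_simps)
    then have "s * ((1 - r) * x) = s * x" by simp
    then show ?thesis using s1 by (metis mult.assoc mult_1_left)
  qed
  have sq: "s * q = q" by (rule fix1[OF rq])
  have sb: "s * b = b" by (rule fix1[OF rb])
  have sr: "s * r = s - 1" using s1 by (simp add: algebra_simps)
  have rce: "r * (c * e) = 0" unfolding r_def using ce ee
    by (simp add: algebra_simps) (metis mult.assoc)
  have sce: "s * (c * e) = c * e" by (rule fix1[OF rce])
  define N where "N = q * a - q"
  have Nq: "N * q = 0" unfolding N_def using aq qq by (simp add: algebra_simps mult.assoc)
  have qN: "q * N = N" unfolding N_def using qq by (simp add: right_diff_distrib) (metis mult.assoc)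
  have aeq: "a = q + N + c" unfolding N_def c_def by (simp add: algebra_simps)
  define pi where "pi = (1 - q) - e"
  define Y where "Y = N * pi * s"
  have qY: "q * Y = Y" unfolding Y_def using qN by (metis mult.assoc)
  have piq: "pi * q = 0" unfolding pi_def using qq eq by (simp add: algebra_simps)
  have pib: "pi * b = 0" unfolding pi_def using qb eb by (simp add: algebra_simps)
  have Yq: "Y * q = 0" unfolding Y_def using sq piq by (simp add: mult.assoc)
  have Yb: "Y * b = 0" unfolding Y_def using sb pib by (simp add: mult.assoc)
  have Nc: "N * (1 - q) = N" using Nq by (simp add: algebra_simps)
  have ZY: "Z * Y = 0" if "Z * q = 0" for Z using that qY by (metis mult.assoc mult_zero_left)
  have NY: "N * Y = 0" by (rule ZY[OF Nq])
  have cY: "c * Y = 0" by (rule ZY[OF cq])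
  have YY: "Y * Y = 0" by (rule ZY[OF Yq])
  have eY: "e * Y = 0" by (rule ZY[OF eq])
  have rY: "r * Y = 0" by (rule ZY[OF rq])
  have YN: "Y * N = 0" using Yq qN by (metis mult.assoc mult_zero_left)
  have bN: "b * N = 0" using bq qN by (metis mult.assoc mult_zero_left)
  have cN: "c * N = 0" using cq qN by (metis mult.assoc mult_zero_left)
  have eN: "e * N = 0" using eq qN by (metis mult.assoc mult_zero_left)
  have NN: "N * N = 0" using Nq qN by (metis mult.assoc mult_zero_left)
  have cpi: "c * pi = r" unfolding pi_def r_def using cq by (simp add: algebra_simps)
  have cdec: "c = c * e + r" unfolding r_def by simp
  have Yr: "Y * r = Y - N + N * e"
  proof -
    have "Y * r = N * pi * (s * r)" unfolding Y_def by (simp add: mult.assoc)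
    also have "\<dots> = Y - N * pi" unfolding sr Y_def by (simp add: algebra_simps)
    also have "N * pi = N - N * e" unfolding pi_def using Nc by (simp add: algebra_simps)
    finally show ?thesis by simp
  qed
  have pice: "pi * (c * e) = 0"
  proof -
    have x1: "q * (c * e) = 0" using qc by (metis mult.assoc mult_zero_left)
    have x2: "e * (c * e) = c * e" using ce ee by (metis mult.assoc)
    show ?thesis unfolding pi_def by (simp add: left_diff_distrib x1 x2)
  qed
  have Yce: "Y * (c * e) = 0" unfolding Y_def using sce pice by (simp add: mult.assoc)
  have Yc: "Y * c = Y - N + N * e"
  proof -
    have "Y * c = Y * (c * e) + Y * r" using cdec by (metis distrib_left)
    then show ?thesis using Yce Yr by simp
  qed
  define B where "B = q + (Y - N * b) + b"
  have aB: "a * B = q + Y + e"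
  proof -
    have t1: "q * (N * b) = N * b" using qN by (metis mult.assoc)
    have t2: "N * (N * b) = 0" using NN by (metis mult.assoc mult_zero_left)
    have t3: "c * (N * b) = 0" using cN by (metis mult.assoc mult_zero_left)
    show ?thesis unfolding aeq B_def
      by (simp add: distrib_left distrib_right right_diff_distrib left_diff_distrib
          qq qY qb Nq NY cq cY t1 t2 t3 e_def[symmetric])
  qed
  have Ba: "B * a = q + Y + e"
  proof -
    have u1: "N * b * q = 0" using bq by (simp add: mult.assoc)
    have u2: "N * b * N = 0" using bN by (simp add: mult.assoc)
    have u3: "N * b * c = N * e" using bc by (simp add: mult.assoc)
    show ?thesis unfolding aeq B_def
      by (simp add: distrib_left distrib_right right_diff_distrib left_diff_distrib
          qq qN qc Yq YN Yc u1 u2 u3 bq bN bc; simp add: algebra_simps)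
  qed
  have BaB: "B * a * B = B"
  proof -
    have t1: "q * (N * b) = N * b" using qN by (metis mult.assoc)
    have t2: "Y * (N * b) = 0" using YN by (metis mult.assoc mult_zero_left)
    have t3: "e * (N * b) = 0" using eN by (metis mult.assoc mult_zero_left)
    show ?thesis unfolding Ba unfolding B_def
      by (simp add: distrib_left distrib_right right_diff_distrib left_diff_distrib
          qq qY t1 qb Yq YY t2 Yb eq eY t3 eb; simp add: algebra_simps)
  qed
  have res: "a * (1 - a * B) = (1 - q - Y) * r"
  proof -
    have "a * (1 - a * B) = a - (q + N + c) * (q + Y + e)" unfolding aB
      by (simp add: right_diff_distrib flip: aeq)
    also have "\<dots> = N + c - Y - N * e - c * e"
      by (simp add: distrib_left distrib_right qq qY qe Nq NY cq cY; subst aeq; simp add: algebra_simps)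
    also have "\<dots> = (1 - q - Y) * r"
      by (simp add: left_diff_distrib qr Yr; simp add: r_def algebra_simps)
    finally show ?thesis .
  qed
  have "r * (1 - q - Y) = r" by (simp add: right_diff_distrib rq rY)
  then have "P ((1 - q - Y) * r)" using Pr sw unfolding swapP_def by metis
  then show ?thesis unfolding DP_def using aB Ba BaB res by metis
qed

lemma triL_fwd:
  fixes a q :: "'a::ring_1"
  assumes sw: "swapP P" and ip: "invP P" and qq: "q * q = q" and qa: "q * a = q"
    and d: "DP P a"
  shows "DP P (a * (1 - q))"
proof -
  obtain B where g1: "a * B = B * a" and g2: "B * a * B = B" and g3: "P (a * (1 - a * B))"
    using d unfolding DP_def by blast
  define E where "E = a * B"
  define res where "res = a * (1 - a * B)"
  have EE: "E * E = E" unfolding E_def using g2 g1 by (metis mult.assoc)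
  have Ea: "E * a = a * E" unfolding E_def using g1 by (metis mult.assoc)
  have BE: "B * E = B" unfolding E_def using g1 g2 by (metis mult.assoc)
  have Ba: "B * a = E" unfolding E_def using g1 by simp
  have res2: "res = (1 - E) * a" unfolding res_def E_def[symmetric] using Ea by (simp add: algebra_simps)
  define w where "w = q * (1 - E)"
  have resw: "w * res = w"
  proof -
    have x1: "(1 - E) * (1 - E) = 1 - E" using EE by (simp add: algebra_simps)
    have x2: "(1 - E) * a = a * (1 - E)" using Ea by (simp add: algebra_simps)
    have "w * res = q * ((1 - E) * (1 - E) * a)" unfolding res2 w_def by (simp add: mult.assoc)
    also have "\<dots> = (q * a) * (1 - E)" unfolding x1 x2 by (simp add: mult.assoc)
    finally show ?thesis unfolding w_def using qa by simp
  qed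
  obtain s where s1: "(1 - res) * s = 1" using invP_inv[OF ip g3] res_def by metis
  have "w * (1 - res) = 0" using resw by (simp add: algebra_simps)
  then have "w * (1 - res) * s = 0" by simp
  then have w0: "w = 0" using s1 by (metis mult.assoc mult_1_right)
  have qE: "q * E = q" using w0 unfolding w_def by (simp add: algebra_simps)
  have qB: "q * B = q" using qE qa unfolding E_def by (metis mult.assoc)
  define b where "b = B * (1 - q)"
  define c where "c = a * (1 - q)"
  have qa': "(1 - q) * a = a - q" using qa by (simp add: algebra_simps)
  have qB': "(1 - q) * B = B - q" using qB by (simp add: algebra_simps)
  have qE': "(1 - q) * E = E - q" using qE by (simp add: algebra_simps)
  have qq': "q * (1 - q) = 0" using qq by (simp add: algebra_simps)
  have bc: "b * c = E * (1 - q)"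
  proof -
    have "b * c = B * ((1 - q) * a) * (1 - q)" unfolding c_def b_def by (simp add: mult.assoc)
    also have "\<dots> = (B * a) * (1 - q) - B * (q * (1 - q))" unfolding qa' by (simp add: algebra_simps)
    finally show ?thesis using qq' Ba by simp
  qed
  have cb: "c * b = E * (1 - q)"
  proof -
    have "c * b = a * ((1 - q) * B) * (1 - q)" unfolding c_def b_def by (simp add: mult.assoc)
    also have "\<dots> = (a * B) * (1 - q) - a * (q * (1 - q))" unfolding qB' by (simp add: algebra_simps)
    finally show ?thesis using qq' unfolding E_def by simp
  qed
  have bcb: "b * c * b = b"
  proof -
    have "b * c * b = b * (c * b)" by (simp add: mult.assoc)
    also have "\<dots> = b * (E * (1 - q))" using cb by simp
    also have "\<dots> = B * ((1 - q) * E) * (1 - q)" unfolding b_def by (simp add: mult.assoc)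
    also have "\<dots> = (B * E) * (1 - q) - B * (q * (1 - q))" unfolding qE' by (simp add: algebra_simps)
    finally show ?thesis using qq' BE unfolding b_def by simp
  qed
  have qres: "q * res = 0"
  proof -
    have "q * res = w * a" unfolding res2 w_def by (simp add: mult.assoc)
    then show ?thesis using w0 by simp
  qed
  have rc: "c * (1 - c * b) = res * (1 - q)"
  proof -
    have "c * (1 - c * b) = c - c * (c * b)" by (simp add: right_diff_distrib mult.assoc)
    also have "\<dots> = c - c * (E * (1 - q))" unfolding cb ..
    also have "\<dots> = a * (1 - q) - a * ((1 - q) * E) * (1 - q)"
      unfolding c_def by (simp add: mult.assoc)
    also have "\<dots> = a * (1 - q) - (a * E) * (1 - q) + a * (q * (1 - q))"
      unfolding qE' by (simp add: algebra_simps)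
    also have "\<dots> = res * (1 - q)" unfolding res_def E_def using qq' by (simp add: algebra_simps)
    finally show ?thesis .
  qed
  have "(1 - q) * res = res" using qres by (simp add: algebra_simps)
  then have "P (res * (1 - q))" using g3 sw unfolding swapP_def res_def by metis
  then show ?thesis unfolding DP_def using rc cb bc bcb c_def[symmetric] by metis
qed

lemma triL_bwd:
  fixes a q :: "'a::ring_1"
  assumes sw: "swapP P" and ip: "invP P" and qq: "q * q = q" and qa: "q * a = q"
    and d: "DP P (a * (1 - q))"
  shows "DP P a"
proof -
  define c where "c = a * (1 - q)"
  obtain b where k1: "c * b = b * c" and k2: "b * c * b = b" and k3: "P (c * (1 - c * b))"
    using d unfolding DP_def c_def by blast
  have qq': "(1 - q) * q = 0" "q * (1 - q) = 0" using qq by (simp_all add: algebra_simps)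
  have qc: "q * c = 0" unfolding c_def using qa qq'(2) by (simp add: mult.assoc[symmetric])
  have cq: "c * q = 0" unfolding c_def using qq'(1) by (metis mult.assoc mult_zero_right)
  have bbc: "b * (b * c) = b" using k1 k2 by (metis mult.assoc)
  have cbb: "c * (b * b) = b" using k1 k2 by (metis mult.assoc)
  have qb: "q * b = 0" using cbb qc by (metis mult.assoc mult_zero_left)
  have bq: "b * q = 0" using bbc cq by (metis mult.assoc mult_zero_right)
  define e where "e = c * b"
  have ee: "e * e = e" unfolding e_def using k1 k2 by (metis mult.assoc)
  have eq: "e * q = 0" unfolding e_def using bq by (simp add: mult.assoc)
  have qe: "q * e = 0" unfolding e_def using qc by (metis mult.assoc mult_zero_left)
  have ce: "c * e = e * c" unfolding e_def using k1 by (metis mult.assoc)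
  have eb: "e * b = b" unfolding e_def using cbb by (simp add: mult.assoc)
  have be: "b * e = b" unfolding e_def using k1 k2 by (metis mult.assoc)
  have bc: "b * c = e" unfolding e_def using k1 by simp
  define r where "r = c - c * e"
  have rdef: "c * (1 - c * b) = r" unfolding r_def e_def by (simp add: algebra_simps)
  have Pr: "P r" using k3 rdef by simp
  obtain s where s1: "s * (1 - r) = 1" and s2: "(1 - r) * s = 1" using invP_inv[OF ip Pr] by metis
  have rq: "r * q = 0" unfolding r_def using cq eq by (simp add: algebra_simps mult.assoc)
  have qr: "q * r = 0" unfolding r_def using qc by (simp add: right_diff_distrib) (metis mult.assoc mult_zero_left)
  have er: "e * r = 0"
  proof -
    have "e * (c * e) = e * c" using ee ce by (metis mult.assoc)
    then show ?thesis unfolding r_def by (simp add: right_diff_distrib)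
  qed
  have br: "b * r = 0"
  proof -
    have "b * (c * e) = e" using ee bc by (metis mult.assoc)
    then show ?thesis unfolding r_def using bc by (simp add: right_diff_distrib)
  qed
  have fix1: "x * s = x" if "x * r = 0" for x
  proof -
    have "x * (1 - r) = x" using that by (simp add: algebra_simps)
    then have "x * (1 - r) * s = x * s" by simp
    then show ?thesis using s2 by (metis mult.assoc mult_1_right)
  qed
  have qs: "q * s = q" by (rule fix1[OF qr])
  have bs: "b * s = b" by (rule fix1[OF br])
  have rs: "r * s = s - 1" using s2 by (simp add: algebra_simps)
  have cer: "c * e * r = 0"
  proof -
    have "c * e * r = c * (e * r)" by (simp add: mult.assoc)
    then show ?thesis using er by simp
  qed
  have ces: "c * e * s = c * e" by (rule fix1[OF cer])
  define N where "N = a * q - q"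
  have qN: "q * N = 0" unfolding N_def using qa qq by (simp add: right_diff_distrib) (metis mult.assoc)
  have Nq: "N * q = N" unfolding N_def using qq by (simp add: left_diff_distrib) (metis mult.assoc)
  have aeq: "a = q + N + c" unfolding N_def c_def by (simp add: algebra_simps)
  define pi where "pi = (1 - q) - e"
  define Y where "Y = s * pi * N"
  have Yq: "Y * q = Y" unfolding Y_def using Nq by (metis mult.assoc)
  have qpi: "q * pi = 0" unfolding pi_def using qq qe by (simp add: algebra_simps)
  have bpi: "b * pi = 0" unfolding pi_def using bq be by (simp add: algebra_simps)
  have qY: "q * Y = 0" unfolding Y_def using qs qpi by (metis mult.assoc mult_zero_left)
  have bY: "b * Y = 0" unfolding Y_def using bs bpi by (metis mult.assoc mult_zero_left)
  have Nc: "(1 - q) * N = N" using qN by (simp add: algebra_simps)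
  have ZY: "Y * Z = 0" if "q * Z = 0" for Z using that Yq by (metis mult.assoc mult_zero_right)
  have YN: "Y * N = 0" by (rule ZY[OF qN])
  have Yc: "Y * c = 0" by (rule ZY[OF qc])
  have YY: "Y * Y = 0" by (rule ZY[OF qY])
  have Ye: "Y * e = 0" by (rule ZY[OF qe])
  have Yr: "Y * r = 0" by (rule ZY[OF qr])
  have NY: "N * Y = 0" using qY Nq by (metis mult.assoc mult_zero_right)
  have Nb: "N * b = 0" using qb Nq by (metis mult.assoc mult_zero_right)
  have Nc': "N * c = 0" using qc Nq by (metis mult.assoc mult_zero_right)
  have Ne: "N * e = 0" using qe Nq by (metis mult.assoc mult_zero_right)
  have NN: "N * N = 0" using qN Nq by (metis mult.assoc mult_zero_right)
  have cdec: "c = c * e + r" unfolding r_def by simp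
  have rY: "r * Y = Y - N + e * N"
  proof -
    have "r * Y = (r * s) * pi * N" unfolding Y_def by (simp add: mult.assoc)
    also have "\<dots> = Y - pi * N" unfolding rs Y_def by (simp add: algebra_simps)
    also have "pi * N = N - e * N" unfolding pi_def using Nc by (simp add: algebra_simps)
    finally show ?thesis by simp
  qed
  have cepi: "c * e * pi = 0"
  proof -
    have x1: "c * e * q = 0" using eq by (simp add: mult.assoc)
    have x2: "c * e * e = c * e" using ee by (simp add: mult.assoc)
    show ?thesis unfolding pi_def by (simp add: right_diff_distrib x1 x2)
  qed
  have ceY: "c * e * Y = 0" unfolding Y_def using ces cepi
    by (metis mult.assoc mult_zero_left)
  have cY: "c * Y = Y - N + e * N"
  proof -
    have "c * Y = c * e * Y + r * Y" using cdec by (metis distrib_right)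
    then show ?thesis using ceY rY by simp
  qed
  define B where "B = q + (Y - b * N) + b"
  have Ba: "B * a = q + Y + e"
  proof -
    have t1: "b * N * q = b * N" using Nq by (metis mult.assoc)
    have t2: "b * N * N = 0" using NN by (metis mult.assoc mult_zero_right)
    have t3: "b * N * c = 0" using Nc' by (metis mult.assoc mult_zero_right)
    show ?thesis unfolding aeq B_def
      by (simp add: distrib_left distrib_right right_diff_distrib left_diff_distrib
          qq Yq bq qN YN NN qc Yc t1 t2 t3 bc; simp add: algebra_simps)
  qed
  have aB: "a * B = q + Y + e"
  proof -
    have u1: "q * (b * N) = 0" using qb by (metis mult.assoc mult_zero_left)
    have u2: "N * (b * N) = 0" using Nb by (metis mult.assoc mult_zero_left)
    have u3: "c * (b * N) = e * N" using e_def by (simp add: mult.assoc)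
    show ?thesis unfolding aeq B_def
      by (simp add: distrib_left distrib_right right_diff_distrib left_diff_distrib
          qq qY qb NY Nb cY cq u1 u2 u3 e_def[symmetric] Nq)
  qed
  have BaB: "B * a * B = B"
  proof -
    have t1: "b * N * q = b * N" using Nq by (metis mult.assoc)
    have t2: "b * N * Y = 0" using NY by (metis mult.assoc mult_zero_right)
    have t3: "b * N * e = 0" using Ne by (metis mult.assoc mult_zero_right)
    have "B * a * B = B * (q + Y + e)" using aB by (simp add: mult.assoc)
    also have "\<dots> = B" unfolding B_def
      by (simp add: distrib_left distrib_right right_diff_distrib left_diff_distrib
          qq Yq t1 bq qY YY t2 bY qe Ye t3 be)
    finally show ?thesis .
  qed
  have res: "a * (1 - a * B) = r * (1 - q - Y)"
  proof -
    have x: "a * (a * B) = (a * B) * a" by (metis aB Ba mult.assoc)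
    have "a * (1 - a * B) = a - (a * B) * a" by (simp add: right_diff_distrib x)
    also have "\<dots> = a - (q + Y + e) * (q + N + c)" unfolding aB by (simp flip: aeq)
    also have "\<dots> = N + c - Y - e * N - e * c"
      by (simp add: distrib_left distrib_right qq qN qc Yq YN Yc eq; subst aeq; simp add: algebra_simps)
    also have "\<dots> = r * (1 - q - Y)"
      by (simp add: right_diff_distrib rq rY; simp add: r_def ce algebra_simps)
    finally show ?thesis .
  qed
  have "(1 - q - Y) * r = r" by (simp add: left_diff_distrib qr Yr)
  then have "P (r * (1 - q - Y))" using Pr sw unfolding swapP_def by metis
  then show ?thesis unfolding DP_def using aB Ba BaB res by metis
qed



definition nilP :: "'a::ring_1 \<Rightarrow> bool" where
  "nilP y \<longleftrightarrow> (\<exists>n. y ^ n = 0)"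

lemma pow_shift:
  fixes u w :: "'a::ring_1"
  shows "w * (u * w) ^ n = (w * u) ^ n * w"
proof (induction n)
  case 0 then show ?case by simp
next
  case (Suc n)
  have "w * (u * w) ^ Suc n = (w * (u * w) ^ n) * u * w" by (simp only: power_Suc2 mult.assoc)
  also have "\<dots> = (w * u) ^ n * w * u * w" using Suc by simp
  also have "\<dots> = (w * u) ^ Suc n * w" by (simp only: power_Suc2 mult.assoc)
  finally show ?case .
qed

lemma swap_nil: "swapP (nilP :: 'a::ring_1 \<Rightarrow> bool)"
  unfolding swapP_def nilP_def
proof (intro allI impI)
  fix u w :: 'a
  assume "\<exists>n. (u * w) ^ n = 0"
  then obtain n where n: "(u * w) ^ n = 0" by blast
  have "(w * u) ^ Suc n = (w * u) ^ n * w * u"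
    by (simp only: power_Suc2 mult.assoc)
  also have "\<dots> = w * (u * w) ^ n * u" by (simp add: pow_shift)
  finally have "(w * u) ^ Suc n = w * (u * w) ^ n * u" .
  then show "\<exists>n. (w * u) ^ n = 0" using n by (metis mult_zero_left mult_zero_right)
qed

lemma geom_l:
  fixes r :: "'a::ring_1"
  shows "(1 - r) * (\<Sum>i<n. r ^ i) = 1 - r ^ n"
proof (induction n)
  case 0 then show ?case by simp
next
  case (Suc n)
  have "(1 - r) * (\<Sum>i<Suc n. r ^ i) = (1 - r) * (\<Sum>i<n. r ^ i) + (1 - r) * r ^ n"
    by (simp add: distrib_left)
  also have "\<dots> = 1 - r ^ Suc n" using Suc by (simp add: left_diff_distrib power_Suc)
  finally show ?case .
qed

lemma geom_r:
  fixes r :: "'a::ring_1"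
  shows "(\<Sum>i<n. r ^ i) * (1 - r) = 1 - r ^ n"
proof (induction n)
  case 0 then show ?case by simp
next
  case (Suc n)
  have "(\<Sum>i<Suc n. r ^ i) * (1 - r) = (\<Sum>i<n. r ^ i) * (1 - r) + r ^ n * (1 - r)"
    by (simp add: distrib_right)
  also have "\<dots> = 1 - r ^ Suc n" using Suc by (simp add: right_diff_distrib power_Suc2 power_commutes)
  finally show ?case .
qed

lemma inv_nil: "invP (nilP :: 'a::ring_1 \<Rightarrow> bool)"
  unfolding invP_def nilP_def invertible_elem_def
  using geom_l geom_r by (metis diff_zero)

lemma central_jacobson:
  fixes u w l l' :: "'a::ring_1"
  assumes cl: "\<And>y. l * y = y * l" and cl': "\<And>y. l' * y = y * l'"
    and ll: "l' * l = 1"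
    and inv: "invertible_elem (u * w - l)"
  shows "invertible_elem (w * u - l)"
proof -
  obtain t where t1: "(u * w - l) * t = 1" and t2: "t * (u * w - l) = 1"
    using inv unfolding invertible_elem_def by blast
  have a1: "w * u * (w * t * u) - l * (w * t * u) = w * u"
  proof -
    have "w * u * (w * t * u) - l * (w * t * u) = w * ((u * w - l) * t) * u"
      by (simp add: algebra_simps cl)
    then show ?thesis using t1 by simp
  qed
  have a2: "w * t * u * (w * u) - w * t * u * l = w * u"
  proof -
    have "w * t * u * (w * u) - w * t * u * l = w * (t * (u * w - l)) * u"
      by (simp add: algebra_simps cl)
    then show ?thesis using t2 by simp
  qed
  have e1: "(w * u - l) * (w * t * u - 1) = l"
    using a1 by (simp add: algebra_simps)
  have e2: "(w * t * u - 1) * (w * u - l) = l"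
    using a2 by (simp add: algebra_simps)
  have "(w * u - l) * (l' * (w * t * u - 1)) = 1"
    by (metis cl' e1 ll mult.assoc)
  moreover have "(l' * (w * t * u - 1)) * (w * u - l) = 1"
    by (metis e2 ll mult.assoc)
  ultimately show ?thesis unfolding invertible_elem_def by blast
qed



definition QN0 :: "'a::complex_banach_algebra_1 \<Rightarrow> bool" where
  "QN0 y \<longleftrightarrow> (\<forall>z. z \<noteq> 0 \<longrightarrow> invertible_elem (y - scaleC z 1))"

lemma scaleC_1_left: "scaleC z (1::'a::complex_banach_algebra_1) * y = scaleC z y"
  by (simp add: scaleC_mult_left)

lemma scaleC_1_right: "y * scaleC z (1::'a::complex_banach_algebra_1) = scaleC z y"
  by (simp add: scaleC_mult_right)

lemma scaleC_zero: "scaleC 0 (x::'a::complex_banach_algebra_1) = 0"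
  using scaleC_of_real[of 0 x] by simp

lemma scaleC_inv: "z \<noteq> 0 \<Longrightarrow> scaleC (inverse z) (1::'a::complex_banach_algebra_1) * scaleC z 1 = 1"
  by (simp add: scaleC_1_left scaleC_scaleC scaleC_one)

lemma scaleC_inv': "z \<noteq> 0 \<Longrightarrow> scaleC z (1::'a::complex_banach_algebra_1) * scaleC (inverse z) 1 = 1"
  by (simp add: scaleC_1_left scaleC_scaleC scaleC_one)

lemma swap_QN0: "swapP (QN0 :: 'a::complex_banach_algebra_1 \<Rightarrow> bool)"
  unfolding swapP_def QN0_def
proof (intro allI impI)
  fix u w :: 'a and z :: complex
  assume h: "\<forall>z. z \<noteq> 0 \<longrightarrow> invertible_elem (u * w - scaleC z 1)" and z: "z \<noteq> 0"
  show "invertible_elem (w * u - scaleC z 1)"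
    apply (rule central_jacobson[where l' = "scaleC (inverse z) 1"])
    using h z scaleC_inv[OF z] by (simp_all add: scaleC_1_left scaleC_1_right)
qed

lemma inv_neg: "invertible_elem (x::'a::ring_1) \<Longrightarrow> invertible_elem (- x)"
  unfolding invertible_elem_def by (metis minus_mult_minus)

lemma inv_mult: "invertible_elem (x::'a::ring_1) \<Longrightarrow> invertible_elem y \<Longrightarrow> invertible_elem (x * y)"
  unfolding invertible_elem_def by (metis mult.assoc mult_1_left)

lemma inv_QN0: "invP (QN0 :: 'a::complex_banach_algebra_1 \<Rightarrow> bool)"
  unfolding invP_def QN0_def
proof (intro allI impI)
  fix r :: 'a
  assume "\<forall>z. z \<noteq> 0 \<longrightarrow> invertible_elem (r - scaleC z 1)"
  then have "invertible_elem (r - 1)" using scaleC_one[of 1] by (metis one_neq_zero)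
  then have "invertible_elem (- (r - 1))" by (rule inv_neg)
  then show "invertible_elem (1 - r)" by simp
qed

lemma neumann:
  fixes x :: "'a::{real_normed_algebra_1,banach}"
  assumes "norm x < 1"
  shows "invertible_elem (1 - x)"
proof -
  have sm: "summable (\<lambda>n. x ^ n)" by (rule complete_algebra_summable_geometric[OF assms])
  define s where "s = suminf (\<lambda>n. x ^ n)"
  have ss: "(\<lambda>n. x ^ n) sums s" using sm unfolding s_def by (rule summable_sums)
  have tel: "(\<lambda>n. x ^ n - x ^ Suc n) sums (x ^ 0 - 0)"
    by (rule telescope_sums'[OF LIMSEQ_power_zero[OF assms]])
  have "(\<lambda>n. (1 - x) * x ^ n) sums ((1 - x) * s)" by (rule sums_mult[OF ss])
  moreover have "(\<lambda>n. (1 - x) * x ^ n) = (\<lambda>n. x ^ n - x ^ Suc n)"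
    by (simp add: left_diff_distrib)
  ultimately have l: "(1 - x) * s = 1" using tel sums_unique2 by fastforce
  have "(\<lambda>n. x ^ n * (1 - x)) sums (s * (1 - x))" by (rule sums_mult2[OF ss])
  moreover have "(\<lambda>n. x ^ n * (1 - x)) = (\<lambda>n. x ^ n - x ^ Suc n)"
    by (simp add: right_diff_distrib power_commutes)
  ultimately have r: "s * (1 - x) = 1" using tel sums_unique2 by fastforce
  show ?thesis unfolding invertible_elem_def using l r by blast
qed

lemma spec_bound:
  fixes r :: "'a::complex_banach_algebra_1"
  assumes "norm r < cmod z"
  shows "invertible_elem (r - scaleC z 1)"
proof -
  have z: "z \<noteq> 0" using assms norm_ge_zero[of r] by (metis norm_zero not_less)
  define x where "x = scaleC (inverse z) 1 * r"
  have "norm x \<le> norm (scaleC (inverse z) (1::'a)) * norm r" unfolding x_def by (rule norm_mult_ineq)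
  also have "\<dots> = norm r / cmod z" by (simp add: norm_scaleC norm_inverse divide_inverse)
  also have "\<dots> < 1" using assms z by simp
  finally have "invertible_elem (1 - x)" by (rule neumann)
  moreover have "invertible_elem (scaleC z (1::'a))"
    unfolding invertible_elem_def using scaleC_inv[OF z] scaleC_inv'[OF z] by blast
  ultimately have "invertible_elem (- (scaleC z 1 * (1 - x)))" by (intro inv_neg inv_mult)
  moreover have "- (scaleC z 1 * (1 - x)) = r - scaleC z 1"
  proof -
    have "scaleC z 1 * x = r" unfolding x_def using scaleC_inv'[OF z] by (metis mult.assoc mult_1_left)
    then show ?thesis by (simp add: right_diff_distrib)
  qed
  ultimately show ?thesis by simp
qed

lemma qn_QN0:
  fixes r :: "'a::complex_banach_algebra_1"
  assumes "quasinilpotent r"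
  shows "QN0 r"
  unfolding QN0_def
proof (intro allI impI)
  fix z :: complex assume z: "z \<noteq> 0"
  show "invertible_elem (r - scaleC z 1)"
  proof (rule ccontr)
    assume n: "\<not> invertible_elem (r - scaleC z 1)"
    then have zin: "z \<in> ba_spectrum r" unfolding ba_spectrum_def by simp
    have bd: "\<forall>w\<in>ba_spectrum r. cmod w \<le> norm r"
      unfolding ba_spectrum_def using spec_bound by (metis mem_Collect_eq not_le)
    have "bdd_above (cmod ` ba_spectrum r)" using bd by (auto intro: bdd_aboveI)
    then have "cmod z \<le> Sup (cmod ` ba_spectrum r)" using zin by (intro cSup_upper) auto
    then have "cmod z \<le> 0" using assms unfolding quasinilpotent_def spectral_radius_def by simp
    then show False using z by simp
  qed
qed

lemma QN0_qn:
  fixes r :: "'a::complex_banach_algebra_1"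
  assumes "QN0 r" and "\<not> invertible_elem r"
  shows "quasinilpotent r"
proof -
  have "ba_spectrum r = {0}"
    using assms unfolding ba_spectrum_def QN0_def by (auto simp: scaleC_zero)
  then show ?thesis unfolding quasinilpotent_def spectral_radius_def by simp
qed

lemma QN0_zero: "QN0 (0::'a::complex_banach_algebra_1)"
  unfolding QN0_def
proof (intro allI impI)
  fix z :: complex assume z: "z \<noteq> 0"
  have "invertible_elem (scaleC z (1::'a))"
    unfolding invertible_elem_def using scaleC_inv[OF z] scaleC_inv'[OF z] by blast
  then show "invertible_elem (0 - scaleC z (1::'a))" using inv_neg by fastforce
qed

lemma not_inv_zero: "\<not> invertible_elem (0::'a::ring_1)"
  unfolding invertible_elem_def by simp

lemma gdrazin_DP: "g_drazin_invertible (y::'a::complex_banach_algebra_1) \<longleftrightarrow> DP QN0 y"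
proof
  assume "g_drazin_invertible y"
  then show "DP QN0 y" unfolding g_drazin_invertible_def DP_def using qn_QN0 by blast
next
  assume "DP QN0 y"
  then obtain b where b1: "y * b = b * y" and b2: "b * y * b = b" and b3: "QN0 (y * (1 - y * b))"
    unfolding DP_def by blast
  define r where "r = y * (1 - y * b)"
  show "g_drazin_invertible y"
  proof (cases "invertible_elem r")
    case False
    then show ?thesis unfolding g_drazin_invertible_def using b1 b2 b3 QN0_qn r_def by blast
  next
    case True
    then obtain ri where ri: "ri * r = 1" unfolding invertible_elem_def by blast
    have "r * (y * b) = 0"
    proof -
      have "y * b * (y * b) = y * b" using b2 by (simp add: mult.assoc)
      then show ?thesis unfolding r_def by (simp add: right_diff_distrib left_diff_distrib mult.assoc)
    qed
    then have "ri * r * (y * b) = 0" by (simp add: mult.assoc)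
    then have "y * b = 0" using ri by simp
    then have "r = y" unfolding r_def by simp
    then obtain yi where y1: "y * yi = 1" and y2: "yi * y = 1" using True unfolding invertible_elem_def by blast
    have "y * yi = yi * y" "yi * y * yi = yi" "y * (1 - y * yi) = 0" using y1 y2 by simp_all
    then show ?thesis unfolding g_drazin_invertible_def using QN0_zero not_inv_zero QN0_qn by metis
  qed
qed

lemma drazin_DP: "drazin_invertible (y::'a::complex_banach_algebra_1) \<longleftrightarrow> DP nilP y"
  unfolding drazin_invertible_def DP_def nilP_def by blast



lemma F1:
  fixes p q :: "'a::ring_1"
  shows "p + q - p * q + (\<Sum>k = 2..Suc n. (p * q) ^ (k - 1) * p - (p * q) ^ k)
     = q + (\<Sum>j<Suc n. (p * q) ^ j) * p * (1 - q)"
proof (induction n)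
  case 0 then show ?case by (simp add: algebra_simps)
next
  case (Suc n)
  have "(\<Sum>k = 2..Suc (Suc n). (p * q) ^ (k - 1) * p - (p * q) ^ k)
      = (\<Sum>k = 2..Suc n. (p * q) ^ (k - 1) * p - (p * q) ^ k) + ((p * q) ^ Suc n * p - (p * q) ^ Suc (Suc n))"
    by (simp add: sum.cl_ivl_Suc)
  moreover have "(\<Sum>j<Suc (Suc n). (p * q) ^ j) * p * (1 - q)
      = (\<Sum>j<Suc n. (p * q) ^ j) * p * (1 - q) + ((p * q) ^ Suc n * p - (p * q) ^ Suc (Suc n))"
  proof -
    have "(p * q) ^ Suc n * p * (1 - q) = (p * q) ^ Suc n * p - (p * q) ^ Suc (Suc n)"
      by (simp only: right_diff_distrib mult_1_right power_Suc2[of _ "Suc n"] mult.assoc)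
    then show ?thesis by (simp add: distrib_right)
  qed
  ultimately show ?case using Suc by (simp add: algebra_simps)
qed

lemma pp_lemma:
  fixes p q :: "'a::ring_1"
  assumes pp: "p * p = p"
  shows "p * ((p * q) ^ n * p) = (p * q) ^ n * p"
proof (cases n)
  case 0 then show ?thesis using pp by simp
next
  case (Suc k)
  have "p * ((p * q) ^ n * p) = (p * p) * q * ((p * q) ^ k * p)"
    unfolding Suc by (simp only: power_Suc mult.assoc)
  also have "\<dots> = (p * q) ^ n * p" unfolding Suc pp by (simp only: power_Suc mult.assoc)
  finally show ?thesis .
qed

lemma F4:
  fixes p q :: "'a::ring_1"
  assumes pp: "p * p = p"
  shows "p * (1 - q) * (\<Sum>j<n. (p * q) ^ j) * p = p - (p * q) ^ n * p"
proof (induction n)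
  case 0 then show ?case by simp
next
  case (Suc n)
  have "p * (1 - q) * (\<Sum>j<Suc n. (p * q) ^ j) * p
      = p * (1 - q) * (\<Sum>j<n. (p * q) ^ j) * p + p * (1 - q) * (p * q) ^ n * p"
    by (simp add: distrib_left distrib_right)
  also have "p * (1 - q) * (p * q) ^ n * p = (p * q) ^ n * p - (p * q) ^ Suc n * p"
  proof -
    have "p * (1 - q) * (p * q) ^ n * p = p * ((p * q) ^ n * p) - p * q * (p * q) ^ n * p"
      by (simp add: left_diff_distrib right_diff_distrib mult.assoc)
    also have "\<dots> = (p * q) ^ n * p - (p * q) ^ Suc n * p"
      using pp_lemma[OF pp] by (simp only: power_Suc mult.assoc)
    finally show ?thesis .
  qed
  finally show ?case using Suc by simp
qed

lemma chain:
  fixes p q :: "'a::ring_1"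
  assumes sw: "swapP P" and ip: "invP P" and pp: "p * p = p" and qq: "q * q = q" and m: "m \<ge> 1"
  shows "DP P (p + q - p * q + (\<Sum>k = 2..m. (p * q) ^ (k - 1) * p - (p * q) ^ k))
     \<longleftrightarrow> DP P (1 - (p * q) ^ m)"
proof -
  obtain n where mn: "m = Suc n" using m by (cases m) auto
  define S where "S = (\<Sum>j<m. (p * q) ^ j)"
  define a where "a = q + S * p * (1 - q)"
  define x where "x = 1 - (p * q) ^ m"
  have aeq: "p + q - p * q + (\<Sum>k = 2..m. (p * q) ^ (k - 1) * p - (p * q) ^ k) = a"
    unfolding a_def S_def mn by (rule F1)
  have qq': "(1 - q) * q = 0" using qq by (simp add: algebra_simps)
  have aq: "a * q = q" unfolding a_def using qq qq' by (simp add: distrib_right mult.assoc)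
  define u where "u = (1 - q) * S * p"
  define v where "v = p * (1 - q)"
  have c: "(1 - q) * a = u * v"
  proof -
    have "(1 - q) * a = (1 - q) * q + (1 - q) * S * p * (1 - q)"
      unfolding a_def by (simp add: distrib_left mult.assoc)
    also have "\<dots> = u * v"
    proof -
      have "p * (p * (1 - q)) = p * (1 - q)" using pp by (metis mult.assoc)
      then show ?thesis unfolding u_def v_def using qq' by (simp add: mult.assoc)
    qed
    finally show ?thesis .
  qed
  have qq2: "(1 - q) * (1 - q) = 1 - q" using qq by (simp add: algebra_simps)
  have d: "v * u = x * (1 - (1 - p))"
  proof -
    have "v * u = p * ((1 - q) * (1 - q)) * S * p" unfolding u_def v_def by (simp add: mult.assoc)
    also have "\<dots> = p - (p * q) ^ m * p" unfolding qq2 S_def by (rule F4[OF pp])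
    also have "\<dots> = x * (1 - (1 - p))" unfolding x_def by (simp add: left_diff_distrib)
    finally show ?thesis .
  qed
  have pp1: "(1 - p) * (1 - p) = 1 - p" using pp by (simp add: algebra_simps)
  have px: "(1 - p) * x = 1 - p"
  proof -
    have "(1 - p) * (p * q) ^ m = (1 - p) * p * q * (p * q) ^ n"
      unfolding mn by (simp only: power_Suc mult.assoc)
    also have "(1 - p) * p = 0" using pp by (simp add: algebra_simps)
    finally show ?thesis unfolding x_def by (simp add: right_diff_distrib)
  qed
  have "DP P a \<longleftrightarrow> DP P ((1 - q) * a)"
    using triR_fwd[OF sw ip qq aq] triR_bwd[OF sw ip qq aq] by blast
  also have "\<dots> \<longleftrightarrow> DP P (v * u)" unfolding c using cline[OF sw] by blast
  also have "\<dots> \<longleftrightarrow> DP P x" unfolding d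
    using triL_fwd[OF sw ip pp1 px] triL_bwd[OF sw ip pp1 px] by blast
  finally show ?thesis unfolding aeq x_def .
qed

theorem corollary3p2:
  fixes p q :: "'a::complex_banach_algebra_1" and m :: nat
  assumes "idempotent p" and "idempotent q" and "m \<ge> 1"
  shows "(drazin_invertible
            (p + q - p * q + (\<Sum>k = 2..m. (p * q) ^ (k - 1) * p - (p * q) ^ k))
          \<longleftrightarrow> drazin_invertible (1 - (p * q) ^ m))
       \<and> (g_drazin_invertible
            (p + q - p * q + (\<Sum>k = 2..m. (p * q) ^ (k - 1) * p - (p * q) ^ k))
          \<longleftrightarrow> g_drazin_invertible (1 - (p * q) ^ m))"
  using chain[OF swap_nil inv_nil] chain[OF swap_QN0 inv_QN0] assms
  unfolding drazin_DP gdrazin_DP idempotent_def by blast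


end
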